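(* Let $H=(\mathcal{V},\mathcal{I})$ be an interval hypergraph and let $t:\mathcal{I}\to\mathcal{V}$ be any representative function with image $R$. Then the co-occurrence graph $G_{R,t}$ is a perfect graph.
   Context: An interval hypergraph is a hypergraph whose vertex set is $[n]=\{1,\dots,n\}$ (with its natural linear order) and whose hyperedges are intervals, i.e. nonempty sets of consecutive integers $\{i,i+1,\dots,j\}$ with $i\leq j$. A representative function is a map $t:\mathcal{I}\to\mathcal{V}$ with $t(I)\in I$ for every $I\in\mathcal{I}$; $R=t(\mathcal{I})$. The co-occurrence graph $G_{R,t}$ is the simple graph with vertex set $R$ in which distinct $u,v\in R$ are adjacent if and only if there is $I\in\mathcal{I}$ with $u,v\in I$ and $t(I)\in\{u,v\}$. A graph is perfect if for every induced subgraph the chromatic number equals the clique number. *)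

theory Defs
  imports Main
begin

definition interval_hypergraph :: "nat \<Rightarrow> nat set set \<Rightarrow> bool" where
  "interval_hypergraph n \<I> \<longleftrightarrow>
     (\<forall>I\<in>\<I>. \<exists>i j. 1 \<le> i \<and> i \<le> j \<and> j \<le> n \<and> I = {i..j})"

definition representative_function :: "nat set set \<Rightarrow> (nat set \<Rightarrow> nat) \<Rightarrow> bool" where
  "representative_function \<I> t \<longleftrightarrow> (\<forall>I\<in>\<I>. t I \<in> I)"

text \<open>Adjacency of the co-occurrence graph G_{R,t}; its vertex set is R = t ` I.\<close>
definition cooc_adj :: "nat set set \<Rightarrow> (nat set \<Rightarrow> nat) \<Rightarrow> nat \<Rightarrow> nat \<Rightarrow> bool" where
  "cooc_adj \<I> t u v \<longleftrightarrow> u \<in> t ` \<I> \<and> v \<in> t ` \<I> \<and> u \<noteq> v \<and>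
     (\<exists>I\<in>\<I>. u \<in> I \<and> v \<in> I \<and> (t I = u \<or> t I = v))"

definition is_clique :: "('a \<Rightarrow> 'a \<Rightarrow> bool) \<Rightarrow> 'a set \<Rightarrow> bool" where
  "is_clique E K \<longleftrightarrow> (\<forall>u\<in>K. \<forall>v\<in>K. u \<noteq> v \<longrightarrow> E u v)"

definition clique_number :: "('a \<Rightarrow> 'a \<Rightarrow> bool) \<Rightarrow> 'a set \<Rightarrow> nat" where
  "clique_number E S = Max {card K | K. K \<subseteq> S \<and> is_clique E K}"

definition is_coloring :: "('a \<Rightarrow> 'a \<Rightarrow> bool) \<Rightarrow> 'a set \<Rightarrow> nat \<Rightarrow> ('a \<Rightarrow> nat) \<Rightarrow> bool" where
  "is_coloring E S k c \<longleftrightarrow> c ` S \<subseteq> {..<k} \<and> (\<forall>u\<in>S. \<forall>v\<in>S. E u v \<longrightarrow> c u \<noteq> c v)"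

definition chromatic_number :: "('a \<Rightarrow> 'a \<Rightarrow> bool) \<Rightarrow> 'a set \<Rightarrow> nat" where
  "chromatic_number E S = (LEAST k. \<exists>c. is_coloring E S k c)"

definition perfect_graph :: "'a set \<Rightarrow> ('a \<Rightarrow> 'a \<Rightarrow> bool) \<Rightarrow> bool" where
  "perfect_graph V E \<longleftrightarrow> finite V \<and> (\<forall>S\<subseteq>V. chromatic_number E S = clique_number E S)"

end

theory Submission
  imports Defs
begin

definition antich :: "('a \<Rightarrow> 'a \<Rightarrow> bool) \<Rightarrow> 'a set \<Rightarrow> bool" where
  "antich P A \<longleftrightarrow> (\<forall>x\<in>A. \<forall>y\<in>A. \<not> P x y)"

definition chcol :: "('a \<Rightarrow> 'a \<Rightarrow> bool) \<Rightarrow> 'a set \<Rightarrow> nat \<Rightarrow> ('a \<Rightarrow> nat) \<Rightarrow> bool" where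
  "chcol P S k c \<longleftrightarrow> c ` S \<subseteq> {..<k} \<and> (\<forall>u\<in>S. \<forall>v\<in>S. u \<noteq> v \<and> c u = c v \<longrightarrow> P u v \<or> P v u)"

lemma maximal_exists:
  assumes irr: "\<forall>x. \<not> P x x" and tr: "\<forall>x y z. P x y \<longrightarrow> P y z \<longrightarrow> P x z"
    and "finite T" "T \<noteq> {}"
  shows "\<exists>x\<in>T. \<forall>z\<in>T. \<not> P x z"
  using assms(3,4)
proof (induction T rule: finite_ne_induct)
  case (singleton x) then show ?case using irr by auto
next
  case (insert y T)
  then obtain x where x: "x \<in> T" "\<forall>z\<in>T. \<not> P x z" by blast
  show ?case
  proof (cases "P x y")
    case True
    have "\<forall>z\<in>insert y T. \<not> P y z" using x True irr tr by blast
    then show ?thesis by blast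
  next
    case False then show ?thesis using x by blast
  qed
qed

lemma maximum_exists:
  assumes irr: "\<forall>x. \<not> P x x" and tr: "\<forall>x y z. P x y \<longrightarrow> P y z \<longrightarrow> P x z"
    and "finite T" "T \<noteq> {}" and ch: "\<forall>u\<in>T. \<forall>v\<in>T. u \<noteq> v \<longrightarrow> P u v \<or> P v u"
  shows "\<exists>x\<in>T. \<forall>z\<in>T. z = x \<or> P z x"
  using maximal_exists[where P=P, OF irr tr assms(3,4)] ch by metis

lemma dilworth:
  assumes irr: "\<forall>x. \<not> P x x" and tr: "\<forall>x y z. P x y \<longrightarrow> P y z \<longrightarrow> P x z"
  shows "finite S \<Longrightarrow> (\<forall>A. A \<subseteq> S \<and> antich P A \<longrightarrow> card A \<le> k) \<Longrightarrow> \<exists>c. chcol P S k c"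
proof (induction "card S" arbitrary: S k rule: less_induct)
  case less
  show ?case
  proof (cases "S = {}")
    case True then show ?thesis by (auto simp: chcol_def)
  next
    case False
    obtain a where a: "a \<in> S" "\<forall>z\<in>S. \<not> P a z"
      using maximal_exists[where P=P, OF irr tr less.prems(1) False] by blast
    define S' where "S' = S - {a}"
    have fS': "finite S'" using less.prems(1) S'_def by auto
    have cS': "card S' < card S" using card_Diff1_less[OF less.prems(1) a(1)] S'_def by simp
    define W where "W = {card A | A. A \<subseteq> S' \<and> antich P A}"
    have fW: "finite W" unfolding W_def
      using fS' by (auto intro: finite_subset[of _ "card ` Pow S'"])
    have W0: "0 \<in> W" unfolding W_def antich_def by (auto intro!: exI[of _ "{}"])
    define k' where "k' = Max W"
    have k'ub: "\<And>A. A \<subseteq> S' \<Longrightarrow> antich P A \<Longrightarrow> card A \<le> k'"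
      unfolding k'_def using fW W_def by (auto intro!: Max_ge)
    obtain A0 where A0: "A0 \<subseteq> S'" "antich P A0" "card A0 = k'"
    proof -
      have "k' \<in> W" unfolding k'_def using Max_in[OF fW] W0 by blast
      then show ?thesis using that unfolding W_def by blast
    qed
    have k'k: "k' \<le> k" using A0 less.prems(2) S'_def by auto
    obtain c where c: "chcol P S' k' c" using less.hyps[OF cS' fS'] k'ub by blast
    define M where "M = {A. A \<subseteq> S' \<and> antich P A \<and> card A = k'}"
    have meet: "\<exists>z\<in>A. c z = i" if "A \<in> M" "i < k'" for A i
    proof -
      have AM: "A \<subseteq> S'" "antich P A" "card A = k'" using that M_def by auto
      have fA: "finite A" using AM fS' finite_subset by blast
      have inj: "inj_on c A"
      proof (rule inj_onI)
        fix x y assume "x \<in> A" "y \<in> A" "c x = c y"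
        then show "x = y" using c AM unfolding chcol_def antich_def by blast
      qed
      have sub: "c ` A \<subseteq> {..<k'}" using c AM unfolding chcol_def by auto
      have "card (c ` A) = k'" using card_image[OF inj] AM by simp
      then have "c ` A = {..<k'}" using sub by (simp add: card_subset_eq)
      then show ?thesis using that by (metis imageE lessThan_iff)
    qed
    show ?thesis
    proof (cases "k' = 0")
      case True
      then have "S' = {}"
      proof -
        { fix x assume "x \<in> S'"
          then have "card {x} \<le> k'" using k'ub[of "{x}"] irr by (auto simp: antich_def)
          then have False using True by simp }
        then show ?thesis by blast
      qed
      then have Sa: "S = {a}" using S'_def a by auto
      have "card {a} \<le> k" using less.prems(2) Sa irr by (auto simp: antich_def)
      then have "chcol P S k (\<lambda>_. 0)" using Sa by (auto simp: chcol_def)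
      then show ?thesis by blast
    next
      case knz: False
      have M0: "A0 \<in> M" using A0 M_def by auto
      define D where "D i = {z\<in>S'. c z = i \<and> (\<exists>A\<in>M. z \<in> A)}" for i
      have xex: "\<exists>x\<in>D i. \<forall>z\<in>D i. z = x \<or> P z x" if "i < k'" for i
      proof (rule maximum_exists[where P=P, OF irr tr])
        show "finite (D i)" using fS' D_def by auto
        show "D i \<noteq> {}" using meet[OF M0 that] A0 D_def M0 by auto
        show "\<forall>u\<in>D i. \<forall>v\<in>D i. u \<noteq> v \<longrightarrow> P u v \<or> P v u"
          using c unfolding D_def chcol_def by auto
      qed
      define x where "x i = (SOME y. y \<in> D i \<and> (\<forall>z\<in>D i. z = y \<or> P z y))" for i
      have xp: "x i \<in> D i \<and> (\<forall>z\<in>D i. z = x i \<or> P z (x i))" if "i < k'" for i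
      proof -
        have "\<exists>y. y \<in> D i \<and> (\<forall>z\<in>D i. z = y \<or> P z y)" using xex[OF that] by blast
        from someI_ex[OF this] show ?thesis unfolding x_def .
      qed
      show ?thesis
      proof (cases "\<exists>i<k'. P (x i) a")
        case False
        define X where "X = insert a (x ` {..<k'})"
        have xD: "x i \<in> D i" if "i < k'" for i using xp[OF that] by blast
        have xS': "x i \<in> S'" if "i < k'" for i using xD[OF that] unfolding D_def by blast
        have xc: "c (x i) = i" if "i < k'" for i using xD[OF that] unfolding D_def by blast
        have injx: "inj_on x {..<k'}"
        proof (rule inj_onI)
          fix i j assume ij: "i \<in> {..<k'}" "j \<in> {..<k'}" "x i = x j"
          have ci: "c (x i) = i" using xc ij(1) by simp
          have cj: "c (x j) = j" using xc ij(2) by simp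
          show "i = j" using ci cj ij(3) by metis
        qed
        have aX: "a \<notin> x ` {..<k'}"
        proof
          assume "a \<in> x ` {..<k'}"
          then obtain i where "i < k'" "a = x i" by auto
          then show False using xS'[of i] S'_def by auto
        qed
        have "antich P (x ` {..<k'})"
          unfolding antich_def
        proof (intro ballI notI)
          fix u v assume "u \<in> x ` {..<k'}" "v \<in> x ` {..<k'}" and Puv: "P u v"
          then obtain i j where ij: "i < k'" "j < k'" "u = x i" "v = x j" by auto
          obtain Aj where Aj: "Aj \<in> M" "x j \<in> Aj" using xD[OF ij(2)] unfolding D_def by blast
          obtain z where z: "z \<in> Aj" "c z = i" using meet[OF Aj(1) ij(1)] by blast
          have "Aj \<subseteq> S'" using Aj(1) M_def by simp
          then have zD: "z \<in> D i" unfolding D_def using z Aj by blast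
          have zi: "z = x i \<or> P z (x i)" using xp[OF ij(1)] zD by blast
          have Pij: "P (x i) (x j)" using Puv ij(3,4) by simp
          have "P z (x j)"
          proof (cases "z = x i")
            case True then show ?thesis using Pij by simp
          next
            case False
            then have "P z (x i)" using zi by blast
            then show ?thesis using Pij tr by blast
          qed
          moreover have "antich P Aj" using Aj(1) M_def by simp
          ultimately show False using z(1) Aj(2) unfolding antich_def by blast
        qed
        then have "antich P X" using False a(2) S'_def aX xS' irr
          unfolding X_def antich_def by auto
        moreover have "X \<subseteq> S" using xS' a S'_def X_def by auto
        moreover have "card X = Suc k'" unfolding X_def using aX card_image[OF injx] by simp
        ultimately have "Suc k' \<le> k" using less.prems(2) by metis
        define c' where "c' = c(a := k')"
        have "chcol P S k c'"
          unfolding chcol_def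
        proof (intro conjI ballI impI)
          show "c' ` S \<subseteq> {..<k}" using c \<open>Suc k' \<le> k\<close> unfolding c'_def chcol_def S'_def
            by (auto split: if_splits)
          fix u v assume uv: "u \<in> S" "v \<in> S" "u \<noteq> v \<and> c' u = c' v"
          have ck: "\<And>w. w \<in> S' \<Longrightarrow> c w < k'" using c unfolding chcol_def by auto
          show "P u v \<or> P v u"
          proof (cases "u = a \<or> v = a")
            case True
            show ?thesis
            proof (cases "u = a")
              case True
              then have "v \<noteq> a" "v \<in> S'" using uv S'_def by auto
              then have "c' v < k'" using ck c'_def by simp
              moreover have "c' u = k'" using True c'_def by simp
              ultimately show ?thesis using uv by simp
            next
              case False
              then have "v = a" "u \<in> S'" using uv S'_def \<open>u = a \<or> v = a\<close> by auto
              then have "c' u < k'" "c' v = k'" using ck c'_def False by auto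
              then show ?thesis using uv by simp
            qed
          next
            case False then show ?thesis using uv c unfolding c'_def S'_def chcol_def by auto
          qed
        qed
        then show ?thesis by blast
      next
        case True
        then obtain i where i: "i < k'" "P (x i) a" by blast
        define K where "K = insert a {z\<in>S'. c z = i \<and> (z = x i \<or> P z (x i))}"
        define S'' where "S'' = S - K"
        have fS'': "finite S''" using less.prems(1) S''_def by auto
        have cS'': "card S'' < card S" unfolding S''_def
        proof (rule psubset_card_mono[OF less.prems(1)])
          show "S - K \<subset> S" using a(1) K_def by blast
        qed
        have bnd: "\<forall>B. B \<subseteq> S'' \<and> antich P B \<longrightarrow> card B \<le> k' - 1"
        proof (intro allI impI)
          fix B assume B: "B \<subseteq> S'' \<and> antich P B"
          have BS': "B \<subseteq> S'" using B S''_def S'_def K_def by auto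
          have "card B \<le> k'" using k'ub BS' B by blast
          moreover have "card B \<noteq> k'"
          proof
            assume "card B = k'"
            then have BM: "B \<in> M" using BS' B M_def by auto
            obtain z where z: "z \<in> B" "c z = i" using meet[OF BM i(1)] by blast
            have "z \<in> D i" using z BM BS' D_def by auto
            then have "z \<in> K" using xp[OF i(1)] z BS' K_def by blast
            then show False using z B S''_def by auto
          qed
          ultimately show "card B \<le> k' - 1" by simp
        qed
        obtain c'' where c'': "chcol P S'' (k' - 1) c''" using less.hyps[OF cS'' fS'' bnd] by blast
        define c' where "c' w = (if w \<in> K then k' - 1 else c'' w)" for w
        have "chcol P S k c'"
          unfolding chcol_def
        proof (intro conjI ballI impI)
          show "c' ` S \<subseteq> {..<k}" using c'' k'k knz unfolding c'_def chcol_def S''_def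
            by auto
          fix u v assume uv: "u \<in> S" "v \<in> S" "u \<noteq> v \<and> c' u = c' v"
          show "P u v \<or> P v u"
          proof (cases "u \<in> K")
            case uK: True
            show ?thesis
            proof (cases "v \<in> K")
              case vK: True
              have Kc: "\<forall>w\<in>K. w \<noteq> a \<longrightarrow> w \<in> S' \<and> c w = i \<and> P w a"
                using K_def i tr by auto
              show ?thesis
              proof (cases "u = a \<or> v = a")
                case True then show ?thesis using Kc uK vK uv by auto
              next
                case False
                then have "u \<in> S'" "v \<in> S'" "c u = c v" using Kc uK vK by auto
                then show ?thesis using uv c unfolding chcol_def by blast
              qed
            next
              case False
              then have "c'' v < k' - 1" using c'' uv S''_def unfolding chcol_def by auto
              then show ?thesis using uv uK False c'_def by auto
            qed
          next
            case uK: False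
            show ?thesis
            proof (cases "v \<in> K")
              case True
              have "c'' u < k' - 1" using c'' uv uK S''_def unfolding chcol_def by auto
              then show ?thesis using uv uK True c'_def by auto
            next
              case False
              then show ?thesis using uv uK c'' S''_def c'_def unfolding chcol_def by auto
            qed
          qed
        qed
        then show ?thesis by blast
      qed
    qed
  qed
qed

lemma perfect_from_order:
  assumes irr: "\<forall>x. \<not> P x x" and tr: "\<forall>x y z. P x y \<longrightarrow> P y z \<longrightarrow> P x z"
    and fV: "finite V"
    and Eiff: "\<forall>u\<in>V. \<forall>v\<in>V. E u v \<longleftrightarrow> (u \<noteq> v \<and> \<not> P u v \<and> \<not> P v u)"
  shows "perfect_graph V E"
  unfolding perfect_graph_def
proof (intro conjI allI impI)
  show "finite V" by (rule fV)
  fix S assume SV: "S \<subseteq> V"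
  have fS: "finite S" using SV fV finite_subset by blast
  define Q where "Q = {card K | K. K \<subseteq> S \<and> is_clique E K}"
  have fQ: "finite Q" unfolding Q_def
    using fS by (auto intro: finite_subset[of _ "card ` Pow S"])
  have Q0: "0 \<in> Q" unfolding Q_def is_clique_def by (auto intro!: exI[of _ "{}"])
  define w where "w = Max Q"
  have cn: "clique_number E S = w" unfolding clique_number_def w_def Q_def by simp
  have wub: "\<And>K. K \<subseteq> S \<Longrightarrow> is_clique E K \<Longrightarrow> card K \<le> w"
    unfolding w_def using fQ Q_def by (auto intro!: Max_ge)
  obtain K0 where K0: "K0 \<subseteq> S" "is_clique E K0" "card K0 = w"
  proof -
    have "w \<in> Q" unfolding w_def using Max_in[OF fQ] Q0 by blast
    then show ?thesis using that unfolding Q_def by blast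
  qed
  have "\<forall>A. A \<subseteq> S \<and> antich P A \<longrightarrow> card A \<le> w"
  proof (intro allI impI)
    fix A assume A: "A \<subseteq> S \<and> antich P A"
    have "is_clique E A" unfolding is_clique_def
    proof (intro ballI impI)
      fix u v assume uv: "u \<in> A" "v \<in> A" "u \<noteq> v"
      have V: "u \<in> V" "v \<in> V" using A SV uv by auto
      have "\<not> P u v" "\<not> P v u" using A uv unfolding antich_def by auto
      then show "E u v" using Eiff V uv(3) by simp
    qed
    then show "card A \<le> w" using wub A by blast
  qed
  then obtain c where c: "chcol P S w c" using dilworth[where P=P, OF irr tr fS] by blast
  have col: "is_coloring E S w c"
    unfolding is_coloring_def
  proof (intro conjI ballI impI)
    show "c ` S \<subseteq> {..<w}" using c unfolding chcol_def by auto
    fix u v assume "u \<in> S" "v \<in> S" "E u v"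
    moreover have "u \<in> V" "v \<in> V" using SV \<open>u \<in> S\<close> \<open>v \<in> S\<close> by auto
    ultimately have "u \<noteq> v \<and> \<not> P u v \<and> \<not> P v u" using Eiff by blast
    moreover have "u \<noteq> v \<and> c u = c v \<longrightarrow> P u v \<or> P v u"
      using c \<open>u \<in> S\<close> \<open>v \<in> S\<close> unfolding chcol_def by blast
    ultimately show "c u \<noteq> c v" by blast
  qed
  have le: "chromatic_number E S \<le> w"
    unfolding chromatic_number_def by (rule Least_le) (rule exI[of _ c], rule col)
  have ex: "\<exists>c. is_coloring E S (chromatic_number E S) c"
    unfolding chromatic_number_def by (rule LeastI[where k=w]) (rule exI[of _ c], rule col)
  then obtain c0 where c0: "is_coloring E S (chromatic_number E S) c0" by blast
  have inj: "inj_on c0 K0"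
  proof (rule inj_onI)
    fix x y assume xy: "x \<in> K0" "y \<in> K0" "c0 x = c0 y"
    show "x = y"
    proof (rule ccontr)
      assume "x \<noteq> y"
      then have "E x y" using K0 xy unfolding is_clique_def by blast
      moreover have "\<forall>u\<in>S. \<forall>v\<in>S. E u v \<longrightarrow> c0 u \<noteq> c0 v" using c0 unfolding is_coloring_def by simp
      moreover have "x \<in> S" "y \<in> S" using xy K0(1) by auto
      ultimately show False using xy(3) by blast
    qed
  qed
  have "c0 ` S \<subseteq> {..<chromatic_number E S}" using c0 unfolding is_coloring_def by simp
  then have "c0 ` K0 \<subseteq> {..<chromatic_number E S}" using K0(1) by (meson image_mono order_trans)
  then have "card (c0 ` K0) \<le> chromatic_number E S"
    using card_mono[OF finite_lessThan] by fastforce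
  then have "w \<le> chromatic_number E S" using card_image[OF inj] K0 by simp
  then show "chromatic_number E S = clique_number E S" using le cn by simp
qed

lemma cooc_sym: "cooc_adj I t u v = cooc_adj I t v u"
  unfolding cooc_adj_def by blast

lemma cooc_split:
  assumes H: "interval_hypergraph n I" and uv: "u < v" "v < w" and vR: "v \<in> t ` I"
    and adj: "cooc_adj I t u w"
  shows "cooc_adj I t u v \<or> cooc_adj I t v w"
proof -
  obtain J where J: "J \<in> I" "u \<in> J" "w \<in> J" "t J = u \<or> t J = w" and R: "u \<in> t ` I" "w \<in> t ` I"
    using adj unfolding cooc_adj_def by blast
  obtain i j where "J = {i..j}" using H J(1) unfolding interval_hypergraph_def by blast
  then have vJ: "v \<in> J" using J uv by auto
  show ?thesis
  proof (cases "t J = u")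
    case True
    then have "cooc_adj I t u v" unfolding cooc_adj_def using J vJ R vR uv by auto
    then show ?thesis by blast
  next
    case False
    then have "t J = w" using J by blast
    then have "cooc_adj I t v w" unfolding cooc_adj_def using J vJ R vR uv by auto
    then show ?thesis by blast
  qed
qed

theorem theorem2:
  fixes n :: nat and \<I> :: "nat set set" and t :: "nat set \<Rightarrow> nat"
  assumes "interval_hypergraph n \<I>"
    and "representative_function \<I> t"
  shows "perfect_graph (t ` \<I>) (cooc_adj \<I> t)"
proof -
  define V where "V = t ` \<I>"
  define P where "P u v \<longleftrightarrow> u \<in> V \<and> v \<in> V \<and> u < v \<and> \<not> cooc_adj \<I> t u v" for u v
  have "\<I> \<subseteq> Pow {1..n}"
  proof
    fix J assume "J \<in> \<I>"
    then obtain i j where "1 \<le> i" "j \<le> n" "J = {i..j}"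
      using assms(1) unfolding interval_hypergraph_def by blast
    then show "J \<in> Pow {1..n}" by auto
  qed
  then have "finite \<I>" using finite_subset by blast
  then have fV: "finite V" unfolding V_def by simp
  have irr: "\<forall>x. \<not> P x x" unfolding P_def by simp
  have tr: "\<forall>x y z. P x y \<longrightarrow> P y z \<longrightarrow> P x z"
  proof (intro allI impI)
    fix x y z assume xy: "P x y" and yz: "P y z"
    have "\<not> cooc_adj \<I> t x z"
      using cooc_split[OF assms(1), of x y z t] xy yz unfolding P_def V_def by blast
    then show "P x z" using xy yz unfolding P_def by auto
  qed
  have Eiff: "\<forall>u\<in>V. \<forall>v\<in>V. cooc_adj \<I> t u v \<longleftrightarrow> (u \<noteq> v \<and> \<not> P u v \<and> \<not> P v u)"
  proof (intro ballI)
    fix u v assume uv: "u \<in> V" "v \<in> V"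
    show "cooc_adj \<I> t u v \<longleftrightarrow> (u \<noteq> v \<and> \<not> P u v \<and> \<not> P v u)"
    proof (cases "u = v")
      case True then show ?thesis unfolding cooc_adj_def by simp
    next
      case False
      then have "u < v \<or> v < u" by arith
      then show ?thesis using uv False cooc_sym[of \<I> t u v] unfolding P_def by auto
    qed
  qed
  show ?thesis
    using perfect_from_order[where P=P, OF irr tr fV Eiff] unfolding V_def .
qed

end
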